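(* Let $d$ and $k$ be integers with $2\le k\le d-2$ and let $\varepsilon\in(0,1)$. Set $r=\lceil k(d-k+1)/\varepsilon\rceil$. Then there is a positive integer $p_0=p_0(d,\varepsilon,k)$ such that for every prime $p\ge p_0$ there exists a subset $R\subseteq\mathbb{F}_p^{d-1}$ with $|R|\ge p^{d-k-\varepsilon}/2$ such that every $(k-1)$-dimensional affine subspace of $\mathbb{F}_p^{d-1}$ contains at most $r-1$ points of $R$.
   Context: $\mathbb{F}_p$ denotes the finite field with $p$ elements, and $\mathbb{F}_p^{d-1}$ the $(d-1)$-dimensional vector space over it; a $(k-1)$-dimensional affine subspace is a translate $x+L$ of a $(k-1)$-dimensional linear subspace $L$. *)

theory Defs
  imports Complex_Main "HOL-Computational_Algebra.Primes"
begin

text \<open>Vectors of F_p^n are represented as functions nat => nat with entries in {0..<p}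
  at coordinates i < n and 0 elsewhere (F_p = residues 0..p-1).\<close>

definition Fvec :: "nat \<Rightarrow> nat \<Rightarrow> (nat \<Rightarrow> nat) set" where
  "Fvec p n = {v. (\<forall>i<n. v i < p) \<and> (\<forall>i\<ge>n. v i = 0)}"

definition vadd :: "nat \<Rightarrow> nat \<Rightarrow> (nat \<Rightarrow> nat) \<Rightarrow> (nat \<Rightarrow> nat) \<Rightarrow> (nat \<Rightarrow> nat)" where
  "vadd p n u w = (\<lambda>i. if i < n then (u i + w i) mod p else 0)"

definition lincomb :: "nat \<Rightarrow> nat \<Rightarrow> (nat \<Rightarrow> nat) \<Rightarrow> (nat \<Rightarrow> nat \<Rightarrow> nat) \<Rightarrow> nat \<Rightarrow> (nat \<Rightarrow> nat)" where
  "lincomb p n t vs m = (\<lambda>i. if i < n then (\<Sum>j<m. t j * vs j i) mod p else 0)"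

definition lin_indep :: "nat \<Rightarrow> nat \<Rightarrow> (nat \<Rightarrow> nat \<Rightarrow> nat) \<Rightarrow> nat \<Rightarrow> bool" where
  "lin_indep p n vs m =
     (\<forall>t \<in> Fvec p m. lincomb p n t vs m = (\<lambda>_. 0) \<longrightarrow> (\<forall>j<m. t j = 0))"

definition affine_subspace :: "nat \<Rightarrow> nat \<Rightarrow> nat \<Rightarrow> (nat \<Rightarrow> nat) set \<Rightarrow> bool" where
  "affine_subspace p n m A =
     (\<exists>x \<in> Fvec p n. \<exists>vs. (\<forall>j<m. vs j \<in> Fvec p n) \<and> lin_indep p n vs m \<and>
        A = {vadd p n x (lincomb p n t vs m) | t. t \<in> Fvec p m})"

end

theory Submission
  imports Defs "HOL-Number_Theory.Cong"
begin


definition span_set :: "nat \<Rightarrow> nat \<Rightarrow> (nat \<Rightarrow> nat \<Rightarrow> nat) \<Rightarrow> nat \<Rightarrow> (nat \<Rightarrow> nat) set" where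
  "span_set p n vs m = {lincomb p n t vs m | t. t \<in> Fvec p m}"

definition extf :: "nat \<Rightarrow> 'a set \<Rightarrow> 'a \<Rightarrow> (nat \<Rightarrow> 'a) set" where
  "extf n X z = {f. (\<forall>i<n. f i \<in> X) \<and> (\<forall>i\<ge>n. f i = z)}"

lemma extf_Suc: "extf (Suc n) X z = (\<lambda>(f,x). f(n:=x)) ` (extf n X z \<times> X)"
proof
  show "extf (Suc n) X z \<subseteq> (\<lambda>(f,x). f(n:=x)) ` (extf n X z \<times> X)"
  proof
    fix h assume h: "h \<in> extf (Suc n) X z"
    have "h = (\<lambda>(f,x). f(n:=x)) (h(n:=z), h n)" by auto
    moreover have "(h(n:=z), h n) \<in> extf n X z \<times> X" using h by (auto simp: extf_def)
    ultimately show "h \<in> (\<lambda>(f,x). f(n:=x)) ` (extf n X z \<times> X)" by blast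
  qed
next
  show "(\<lambda>(f,x). f(n:=x)) ` (extf n X z \<times> X) \<subseteq> extf (Suc n) X z"
    by (auto simp: extf_def less_Suc_eq)
qed

lemma extf_card: "finite X \<Longrightarrow> finite (extf n X z) \<and> card (extf n X z) = card X ^ n"
proof (induction n)
  case 0
  have "extf 0 X z = {\<lambda>_. z}" by (auto simp: extf_def)
  then show ?case by simp
next
  case (Suc n)
  have inj: "inj_on (\<lambda>(f,x). f(n:=x)) (extf n X z \<times> X)"
  proof (rule inj_onI, clarsimp)
    fix f x g y assume f: "f \<in> extf n X z" and g: "g \<in> extf n X z" and e: "f(n := x) = g(n := y)"
    have "x = y" using fun_cong[OF e, of n] by simp
    moreover have "f = g"
    proof
      fix i show "f i = g i"
        using fun_cong[OF e, of i] f g by (cases "i = n") (auto simp: extf_def)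
    qed
    ultimately show "f = g \<and> x = y" by simp
  qed
  show ?case using Suc inj by (simp add: extf_Suc card_image card_cartesian_product)
qed

lemma Fvec_extf: "Fvec p n = extf n {..<p} 0"
  by (auto simp: Fvec_def extf_def)

lemma Fvec_card: "finite (Fvec p n) \<and> card (Fvec p n) = p ^ n"
  using extf_card[of "{..<p}" n 0] by (simp add: Fvec_extf)

lemma Fvec_eqI:
  assumes "u \<in> Fvec p n" "w \<in> Fvec p n" "\<forall>i<n. int (u i) mod int p = int (w i) mod int p"
  shows "u = w"
proof
  fix i show "u i = w i"
  proof (cases "i < n")
    case True
    then have "u i < p" "w i < p" using assms by (auto simp: Fvec_def)
    then show ?thesis using assms(3) True
      by (metis of_nat_eq_iff zmod_int mod_less)
  next
    case False then show ?thesis using assms by (auto simp: Fvec_def)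
  qed
qed

lemma lincomb_Fvec: "0 < p \<Longrightarrow> lincomb p n t vs m \<in> Fvec p n"
  by (auto simp: Fvec_def lincomb_def)

lemma vadd_Fvec: "0 < p \<Longrightarrow> vadd p n u w \<in> Fvec p n"
  by (auto simp: Fvec_def vadd_def)

lemma lincomb_int: "i < n \<Longrightarrow>
   int (lincomb p n t vs m i) = (\<Sum>j<m. int (t j) * int (vs j i)) mod int p"
  by (simp add: lincomb_def zmod_int)

lemma vadd_int: "i < n \<Longrightarrow> int (vadd p n u w i) = (int (u i) + int (w i)) mod int p"
  by (simp add: vadd_def zmod_int)

lemma span_Fvec: "0 < p \<Longrightarrow> span_set p n vs m \<subseteq> Fvec p n"
  by (auto simp: span_set_def lincomb_Fvec)

lemma span_finite: "finite (span_set p n vs m)"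
proof -
  have "span_set p n vs m = (\<lambda>t. lincomb p n t vs m) ` Fvec p m"
    by (auto simp: span_set_def)
  then show ?thesis using Fvec_card by simp
qed

lemma span_card: "card (span_set p n vs m) \<le> p ^ m"
proof -
  have "span_set p n vs m = (\<lambda>t. lincomb p n t vs m) ` Fvec p m"
    by (auto simp: span_set_def)
  then show ?thesis using Fvec_card card_image_le by (metis)
qed

lemma lincomb_eqI:
  fixes c :: "nat \<Rightarrow> int"
  assumes p: "0 < p" and v: "v \<in> Fvec p n"
    and h: "\<forall>i<n. int (v i) mod int p = (\<Sum>j<m. c j * int (vs j i)) mod int p"
  shows "v \<in> span_set p n vs m"
proof -
  define t where "t = (\<lambda>j. if j < m then nat (c j mod int p) else 0)"
  have t: "t \<in> Fvec p m" using p
    by (auto simp: t_def Fvec_def nat_less_iff)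
  have "v = lincomb p n t vs m"
  proof (rule Fvec_eqI[OF v lincomb_Fvec[OF p]], intro allI impI)
    fix i assume i: "i < n"
    have "(\<Sum>j<m. int (t j) * int (vs j i)) = (\<Sum>j<m. (c j mod int p) * int (vs j i))"
      using p by (intro sum.cong) (auto simp: t_def)
    also have "\<dots> mod int p = (\<Sum>j<m. (c j mod int p) * int (vs j i) mod int p) mod int p"
      by (simp add: mod_sum_eq)
    also have "\<dots> = (\<Sum>j<m. c j * int (vs j i) mod int p) mod int p"
      by (simp add: mod_mult_left_eq)
    also have "\<dots> = (\<Sum>j<m. c j * int (vs j i)) mod int p"
      by (simp add: mod_sum_eq)
    finally show "int (v i) mod int p = int (lincomb p n t vs m i) mod int p"
      using h i by (simp add: lincomb_int)
  qed
  then show ?thesis using t by (auto simp: span_set_def)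
qed

lemma span_memE:
  assumes "u \<in> span_set p n vs m"
  obtains t where "t \<in> Fvec p m" "\<And>i. i < n \<Longrightarrow> int (u i) = (\<Sum>j<m. int (t j) * int (vs j i)) mod int p"
  using assms by (auto simp: span_set_def lincomb_int)

lemma mod_lin2: "(a * (X mod p) + b * (Y mod p)) mod p = (a*X + b*Y) mod (p::int)"
  by (rule mod_add_cong[OF mod_mult_right_eq mod_mult_right_eq])

lemma span_comb2:
  fixes a b :: int
  assumes p: "0 < p" and v: "v \<in> Fvec p n" and u1: "u1 \<in> span_set p n vs m" and u2: "u2 \<in> span_set p n vs m"
    and h: "\<forall>i<n. int (v i) mod int p = (a * int (u1 i) + b * int (u2 i)) mod int p"
  shows "v \<in> span_set p n vs m"
proof -
  obtain t1 where t1: "\<And>i. i < n \<Longrightarrow> int (u1 i) = (\<Sum>j<m. int (t1 j) * int (vs j i)) mod int p"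
    using span_memE[OF u1] by blast
  obtain t2 where t2: "\<And>i. i < n \<Longrightarrow> int (u2 i) = (\<Sum>j<m. int (t2 j) * int (vs j i)) mod int p"
    using span_memE[OF u2] by blast
  show ?thesis
  proof (rule lincomb_eqI[OF p v, where c = "\<lambda>j. a * int (t1 j) + b * int (t2 j)"], intro allI impI)
    fix i assume i: "i < n"
    have "(a * int (u1 i) + b * int (u2 i)) mod int p
        = (a * (\<Sum>j<m. int (t1 j) * int (vs j i)) + b * (\<Sum>j<m. int (t2 j) * int (vs j i))) mod int p"
      unfolding t1[OF i] t2[OF i] by (rule mod_lin2)
    also have "\<dots> = (\<Sum>j<m. (a * int (t1 j) + b * int (t2 j)) * int (vs j i)) mod int p"
      by (simp add: sum_distrib_left sum.distrib algebra_simps)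
    finally show "int (v i) mod int p = (\<Sum>j<m. (a * int (t1 j) + b * int (t2 j)) * int (vs j i)) mod int p"
      using h i by simp
  qed
qed

lemma zero_in_span: "0 < p \<Longrightarrow> (\<lambda>_. 0) \<in> span_set p n vs m"
  by (rule lincomb_eqI[where c = "\<lambda>_. 0"]) (auto simp: Fvec_def)

lemma gen_in_span: "0 < p \<Longrightarrow> l < m \<Longrightarrow> vs l \<in> Fvec p n \<Longrightarrow> vs l \<in> span_set p n vs m"
proof (rule lincomb_eqI[where c = "\<lambda>j. if j = l then 1 else 0"], simp_all, intro allI impI)
  fix i assume "l < m"
  have "(\<Sum>j<m. (if j = l then 1 else 0) * int (vs j i)) = (\<Sum>j\<in>{l}. int (vs j i))"
    using \<open>l < m\<close> by (intro sum.mono_neutral_cong_right) auto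
  then show "int (vs l i) mod int p = (\<Sum>j<m. (if j = l then 1 else 0) * int (vs j i)) mod int p"
    by simp
qed

lemma span_compose:
  assumes p: "0 < p" and ws: "\<forall>l<j. ws l \<in> span_set p n vs m"
  shows "span_set p n ws j \<subseteq> span_set p n vs m"
proof
  fix x assume x: "x \<in> span_set p n ws j"
  obtain t where t: "\<And>i. i < n \<Longrightarrow> int (x i) = (\<Sum>l<j. int (t l) * int (ws l i)) mod int p"
    using span_memE[OF x] by blast
  have "\<forall>l. \<exists>a. l < j \<longrightarrow> (\<forall>i<n. int (ws l i) = (\<Sum>q<m. int (a q) * int (vs q i)) mod int p)"
    using ws span_memE by metis
  then obtain a where a: "\<And>l i. l < j \<Longrightarrow> i < n \<Longrightarrow> int (ws l i) = (\<Sum>q<m. int (a l q) * int (vs q i)) mod int p"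
    by metis
  show "x \<in> span_set p n vs m"
  proof (rule lincomb_eqI[OF p, where c = "\<lambda>q. \<Sum>l<j. int (t l) * int (a l q)"])
    show "x \<in> Fvec p n" using span_Fvec[OF p] x by blast
  next
    show "\<forall>i<n. int (x i) mod int p = (\<Sum>q<m. (\<Sum>l<j. int (t l) * int (a l q)) * int (vs q i)) mod int p"
    proof (intro allI impI)
    fix i assume i: "i < n"
    have "int (x i) mod int p = (\<Sum>l<j. int (t l) * int (ws l i)) mod int p" using t[OF i] by simp
    also have "\<dots> = (\<Sum>l<j. int (t l) * ((\<Sum>q<m. int (a l q) * int (vs q i)) mod int p)) mod int p"
      using a i by (intro arg_cong[where f = "\<lambda>z. z mod int p"] sum.cong) auto
    also have "\<dots> = (\<Sum>l<j. int (t l) * (\<Sum>q<m. int (a l q) * int (vs q i))) mod int p"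
    proof -
      have "(\<Sum>l<j. int (t l) * ((\<Sum>q<m. int (a l q) * int (vs q i)) mod int p)) mod int p
          = (\<Sum>l<j. int (t l) * ((\<Sum>q<m. int (a l q) * int (vs q i)) mod int p) mod int p) mod int p"
        by (simp add: mod_sum_eq)
      also have "\<dots> = (\<Sum>l<j. int (t l) * (\<Sum>q<m. int (a l q) * int (vs q i)) mod int p) mod int p"
        by (simp add: mod_mult_right_eq)
      also have "\<dots> = (\<Sum>l<j. int (t l) * (\<Sum>q<m. int (a l q) * int (vs q i))) mod int p"
        by (simp add: mod_sum_eq)
      finally show ?thesis .
    qed
    also have "(\<Sum>l<j. int (t l) * (\<Sum>q<m. int (a l q) * int (vs q i)))
       = (\<Sum>q<m. (\<Sum>l<j. int (t l) * int (a l q)) * int (vs q i))"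
      by (simp add: sum_distrib_left sum_distrib_right sum.swap[of _ "{..<j}"] mult.assoc)
    finally show "int (x i) mod int p = (\<Sum>q<m. (\<Sum>l<j. int (t l) * int (a l q)) * int (vs q i)) mod int p" .
  qed
  qed
qed




lemma vadd_zero: "y \<in> Fvec p n \<Longrightarrow> vadd p n y (\<lambda>_. 0) = y"
  by (auto simp: vadd_def Fvec_def fun_eq_iff)

lemma vadd_inj:
  assumes p: "0 < p" and w: "w \<in> Fvec p n" and w': "w' \<in> Fvec p n" and e: "vadd p n y w = vadd p n y w'"
  shows "w = w'"
proof (rule Fvec_eqI[OF w w'], intro allI impI)
  fix i assume i: "i < n"
  have "(int (y i) + int (w i)) mod int p = (int (y i) + int (w' i)) mod int p"
    using vadd_int[OF i, of p y w] vadd_int[OF i, of p y w'] e by simp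
  then show "int (w i) mod int p = int (w' i) mod int p"
    using cong_add_lcancel[of "int (y i)" "int (w i)" "int (w' i)" "int p"] unfolding cong_def by simp
qed

definition vsub :: "nat \<Rightarrow> nat \<Rightarrow> (nat \<Rightarrow> nat) \<Rightarrow> (nat \<Rightarrow> nat) \<Rightarrow> (nat \<Rightarrow> nat)" where
  "vsub p n y z = (\<lambda>i. if i < n then nat ((int (y i) - int (z i)) mod int p) else 0)"

lemma vsub_Fvec: "0 < p \<Longrightarrow> vsub p n y z \<in> Fvec p n"
  by (auto simp: vsub_def Fvec_def nat_less_iff)

lemma vsub_int: "0 < p \<Longrightarrow> i < n \<Longrightarrow> int (vsub p n y z i) = (int (y i) - int (z i)) mod int p"
  by (simp add: vsub_def)

lemma vadd_vsub: assumes p: "0 < p" and y: "y \<in> Fvec p n" and z: "z \<in> Fvec p n"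
  shows "vadd p n z (vsub p n y z) = y"
proof (rule Fvec_eqI[OF vadd_Fvec[OF p] y], intro allI impI)
  fix i assume i: "i < n"
  have "int (vadd p n z (vsub p n y z) i) = (int (z i) + (int (y i) - int (z i)) mod int p) mod int p"
    using vadd_int[OF i] vsub_int[OF p i] by simp
  also have "\<dots> = int (y i) mod int p" by (simp add: mod_simps)
  finally show "int (vadd p n z (vsub p n y z) i) mod int p = int (y i) mod int p" by simp
qed

lemma flat_shift:
  assumes p: "0 < p" and x: "x \<in> Fvec p n"
    and A: "A = {vadd p n x (lincomb p n t vs m) | t. t \<in> Fvec p m}"
    and y0: "y0 \<in> A" and y: "y \<in> A"
  shows "\<exists>w \<in> span_set p n vs m. y = vadd p n y0 w"
proof -
  obtain t0 where t0: "t0 \<in> Fvec p m" "y0 = vadd p n x (lincomb p n t0 vs m)" using y0 A by blast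
  obtain t where t: "t \<in> Fvec p m" "y = vadd p n x (lincomb p n t vs m)" using y A by blast
  have u0: "lincomb p n t0 vs m \<in> span_set p n vs m" using t0 by (auto simp: span_set_def)
  have u: "lincomb p n t vs m \<in> span_set p n vs m" using t by (auto simp: span_set_def)
  have yF: "y \<in> Fvec p n" "y0 \<in> Fvec p n" using t t0 vadd_Fvec[OF p] by auto
  have "vsub p n y y0 \<in> span_set p n vs m"
  proof (rule span_comb2[OF p vsub_Fvec[OF p] u u0, where a = 1 and b = "-1"], intro allI impI)
    fix i assume i: "i < n"
    have "int (vsub p n y y0 i) mod int p = (int (y i) - int (y0 i)) mod int p"
      using vsub_int[OF p i] by simp
    also have "\<dots> = ((int (x i) + int (lincomb p n t vs m i)) mod int p - (int (x i) + int (lincomb p n t0 vs m i)) mod int p) mod int p"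
      using t(2) t0(2) vadd_int[OF i] by simp
    also have "\<dots> = ((int (x i) + int (lincomb p n t vs m i)) - (int (x i) + int (lincomb p n t0 vs m i))) mod int p"
      by (simp add: mod_diff_eq)
    also have "\<dots> = (1 * int (lincomb p n t vs m i) + - 1 * int (lincomb p n t0 vs m i)) mod int p"
      by simp
    finally show "int (vsub p n y y0 i) mod int p = (1 * int (lincomb p n t vs m i) + - 1 * int (lincomb p n t0 vs m i)) mod int p" .
  qed
  moreover have "y = vadd p n y0 (vsub p n y y0)" using vadd_vsub[OF p yF] by simp
  ultimately show ?thesis by blast
qed

lemma card_growth:
  assumes p: "prime p" and ws: "\<forall>l<j. ws l \<in> Fvec p n" and w: "w \<in> Fvec p n"
    and wn: "w \<notin> span_set p n ws j"
  shows "p * card (span_set p n ws j) \<le> card (span_set p n (ws(j := w)) (Suc j))"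
proof -
  have p0: "0 < p" using p prime_gt_0_nat by blast
  define V where "V = span_set p n ws j"
  define V' where "V' = span_set p n (ws(j := w)) (Suc j)"
  define \<phi> where "\<phi> = (\<lambda>(c::nat, u::nat \<Rightarrow> nat). (\<lambda>i. if i < n then (c * w i + u i) mod p else 0))"
  have phiF: "\<phi> cu \<in> Fvec p n" for cu using p0 by (auto simp: \<phi>_def Fvec_def split: prod.splits)
  have phi_int: "int (\<phi> (c, u) i) = (int c * int (w i) + int (u i)) mod int p" if "i < n" for c u i
    using that by (simp add: \<phi>_def zmod_int)
  have sub: "\<phi> ` ({..<p} \<times> V) \<subseteq> V'"
  proof clarify
    fix c u assume c: "c < p" and u: "u \<in> V"
    obtain t where t: "\<And>i. i < n \<Longrightarrow> int (u i) = (\<Sum>l<j. int (t l) * int (ws l i)) mod int p"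
      using span_memE[OF u[unfolded V_def]] by blast
    show "\<phi> (c, u) \<in> V'" unfolding V'_def
    proof (rule lincomb_eqI[OF p0 phiF, where c = "\<lambda>l. if l = j then int c else int (t l)"], intro allI impI)
      fix i assume i: "i < n"
      have "(\<Sum>l<Suc j. (if l = j then int c else int (t l)) * int ((ws(j := w)) l i))
          = (\<Sum>l<j. int (t l) * int (ws l i)) + int c * int (w i)"
        by (simp add: sum.lessThan_Suc)
      then have "(\<Sum>l<Suc j. (if l = j then int c else int (t l)) * int ((ws(j := w)) l i)) mod int p
          = ((\<Sum>l<j. int (t l) * int (ws l i)) mod int p + int c * int (w i)) mod int p"
        by (simp add: mod_simps)
      also have "\<dots> = (int c * int (w i) + int (u i)) mod int p" using t[OF i] by (simp add: add.commute)
      finally show "int (\<phi> (c, u) i) mod int p =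
         (\<Sum>l<Suc j. (if l = j then int c else int (t l)) * int ((ws(j := w)) l i)) mod int p"
        using phi_int[OF i] by simp
    qed
  qed
  have VF: "V \<subseteq> Fvec p n" using span_Fvec[OF p0] V_def by simp
  have inj: "inj_on \<phi> ({..<p} \<times> V)"
  proof (rule inj_onI, clarify)
    fix c u c' u' assume c: "c < p" and u: "u \<in> V" and c': "c' < p" and u': "u' \<in> V"
      and e: "\<phi> (c, u) = \<phi> (c', u')"
    have ce: "(int c * int (w i) + int (u i)) mod int p = (int c' * int (w i) + int (u' i)) mod int p"
      if "i < n" for i using phi_int[OF that, of c u] phi_int[OF that, of c' u'] e by simp
    show "c = c' \<and> u = u'"
    proof (cases "c = c'")
      case True
      have "u = u'"
      proof (rule Fvec_eqI[of u p n u'], use u u' VF in blast, use u u' VF in blast, intro allI impI)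
        fix i assume i: "i < n"
        show "int (u i) mod int p = int (u' i) mod int p"
          using ce[OF i] True cong_add_lcancel[of "int c * int (w i)" "int (u i)" "int (u' i)" "int p"]
          unfolding cong_def by simp
      qed
      with True show ?thesis by simp
    next
      case False
      define \<delta> where "\<delta> = int c - int c'"
      have "\<not> int p dvd \<delta>"
      proof
        assume "int p dvd \<delta>"
        then obtain q where "\<delta> = int p * q" by blast
        moreover have "\<bar>\<delta>\<bar> < int p" "\<delta> \<noteq> 0" using c c' False by (auto simp: \<delta>_def)
        ultimately show False by (cases "q = 0") (auto simp: abs_mult)
      qed
      then have "coprime \<delta> (int p)"
        using p by (metis coprime_commute prime_imp_coprime prime_nat_int_transfer)
      then obtain e where e1: "[\<delta> * e = 1] (mod int p)" using cong_solve_coprime_int by blast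
      have "w \<in> span_set p n ws j"
      proof (rule span_comb2[OF p0 w u'[unfolded V_def] u[unfolded V_def], where a = e and b = "-e"], intro allI impI)
        fix i assume i: "i < n"
        have "[int c * int (w i) + int (u i) = int c' * int (w i) + int (u' i)] (mod int p)"
          using ce[OF i] unfolding cong_def .
        then have "[\<delta> * int (w i) = int (u' i) - int (u i)] (mod int p)"
          unfolding \<delta>_def cong_iff_dvd_diff by (simp add: algebra_simps)
        then have "[e * (\<delta> * int (w i)) = e * (int (u' i) - int (u i))] (mod int p)"
          by (rule cong_mult[OF cong_refl])
        moreover have "[e * (\<delta> * int (w i)) = int (w i)] (mod int p)"
          using cong_mult[OF e1 cong_refl[of "int (w i)"]] by (simp add: algebra_simps)
        ultimately have "[int (w i) = e * int (u' i) + - e * int (u i)] (mod int p)"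
          by (metis cong_sym cong_trans right_diff_distrib' minus_mult_left diff_conv_add_uminus)
        then show "int (w i) mod int p = (e * int (u' i) + - e * int (u i)) mod int p"
          unfolding cong_def .
      qed
      then show ?thesis using wn by simp
    qed
  qed
  have fin: "finite V'" unfolding V'_def by (rule span_finite)
  have "card (\<phi> ` ({..<p} \<times> V)) = p * card V"
    using card_image[OF inj] by (simp add: card_cartesian_product)
  then show ?thesis using card_mono[OF fin sub] V_def V'_def by simp
qed




lemma span_dim0: "0 < p \<Longrightarrow> span_set p n ws 0 = {\<lambda>_. 0}"
proof -
  assume p: "0 < p"
  have "(\<lambda>_. 0) \<in> Fvec p 0" using p by (auto simp: Fvec_def)
  then show ?thesis by (auto simp: span_set_def lincomb_def fun_eq_iff)
qed

lemma greedy: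
  assumes p: "prime p" and x: "x \<in> Fvec p n"
    and A: "A = {vadd p n x (lincomb p n t vs m) | t. t \<in> Fvec p m}"
    and TA: "T \<subseteq> A" and y0: "y0 \<in> T"
  shows "\<exists>j \<le> m. \<exists>ws. (\<forall>l<j. ws l \<in> Fvec p n) \<and> (\<forall>l\<ge>j. ws l = (\<lambda>_. 0))
     \<and> (\<forall>l<j. vadd p n y0 (ws l) \<in> T) \<and> (\<forall>l<j. ws l \<noteq> (\<lambda>_. 0)) \<and> inj_on ws {..<j}
     \<and> T \<subseteq> vadd p n y0 ` span_set p n ws j"
proof -
  have p0: "0 < p" using p prime_gt_0_nat by blast
  have p1: "1 < p" using p prime_gt_1_nat by blast
  define V where "V = span_set p n vs m"
  have VF: "V \<subseteq> Fvec p n" using span_Fvec[OF p0] V_def by simp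
  define good where "good ws j \<longleftrightarrow> (\<forall>l<j. ws l \<in> V) \<and> (\<forall>l\<ge>j. ws l = (\<lambda>_. 0))
     \<and> (\<forall>l<j. vadd p n y0 (ws l) \<in> T) \<and> (\<forall>l<j. ws l \<noteq> (\<lambda>_. 0)) \<and> inj_on ws {..<j}
     \<and> p ^ j \<le> card (span_set p n ws j)" for ws j
  have y0A: "y0 \<in> A" using y0 TA by blast
  have bad: "\<not> good ws (Suc m)" for ws
  proof
    assume g: "good ws (Suc m)"
    have "span_set p n ws (Suc m) \<subseteq> V"
      unfolding V_def by (rule span_compose[OF p0]) (use g in \<open>auto simp: good_def V_def\<close>)
    then have "card (span_set p n ws (Suc m)) \<le> card V"
      by (intro card_mono) (auto simp: V_def span_finite)
    also have "\<dots> \<le> p ^ m" unfolding V_def by (rule span_card)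
    finally have c1: "card (span_set p n ws (Suc m)) \<le> p ^ m" .
    have c2: "p ^ Suc m \<le> card (span_set p n ws (Suc m))" using g by (simp only: good_def)
    have "p ^ m < p ^ Suc m" using p1 by simp
    then show False using c1 c2 by linarith
  qed
  have claim: "(\<exists>j' \<le> j. \<exists>ws. good ws j' \<and> T \<subseteq> vadd p n y0 ` span_set p n ws j') \<or> (\<exists>ws. good ws j)" for j
  proof (induction j)
    case 0
    have "good (\<lambda>_ _. 0) 0" by (simp add: good_def span_dim0[OF p0])
    then show ?case by blast
  next
    case (Suc j)
    then show ?case
    proof
      assume "\<exists>j' \<le> j. \<exists>ws. good ws j' \<and> T \<subseteq> vadd p n y0 ` span_set p n ws j'"
      then show ?case using le_SucI by blast
    next
      assume "\<exists>ws. good ws j"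
      then obtain ws where g: "good ws j" by blast
      show ?case
      proof (cases "T \<subseteq> vadd p n y0 ` span_set p n ws j")
        case True then show ?thesis using g le_SucI by blast
      next
        case False
        then obtain y where yT: "y \<in> T" and yn: "y \<notin> vadd p n y0 ` span_set p n ws j" by blast
        obtain w where wV: "w \<in> V" and yw: "y = vadd p n y0 w"
          using flat_shift[OF p0 x A y0A] yT TA V_def by blast
        have wF: "w \<in> Fvec p n" using wV VF by blast
        have wsF: "\<forall>l<j. ws l \<in> Fvec p n" using g VF by (auto simp: good_def)
        have wn: "w \<notin> span_set p n ws j" using yn yw by blast
        have w0: "w \<noteq> (\<lambda>_. 0)" using wn zero_in_span[OF p0] by metis
        have wl: "w \<noteq> ws l" if "l < j" for l using wn gen_in_span[OF p0 that] wsF that by metis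
        have "good (ws(j := w)) (Suc j)"
          unfolding good_def
        proof (intro conjI allI impI)
          show "(ws(j := w)) l \<in> V" if "l < Suc j" for l using that g wV by (auto simp: good_def)
          show "(ws(j := w)) l = (\<lambda>_. 0)" if "Suc j \<le> l" for l using that g by (auto simp: good_def)
          show "vadd p n y0 ((ws(j := w)) l) \<in> T" if "l < Suc j" for l
            using that g yT yw by (auto simp: good_def less_Suc_eq)
          show "(ws(j := w)) l \<noteq> (\<lambda>_. 0)" if "l < Suc j" for l
            using that g w0 by (auto simp: good_def less_Suc_eq)
          have "inj_on ws {..<j}" using g by (simp add: good_def)
          then have "inj_on (ws(j := w)) {..<j}" by (simp add: inj_on_def)
          moreover have "w \<notin> (ws(j := w)) ` {..<j}" using wl by auto
          ultimately show "inj_on (ws(j := w)) {..<Suc j}" by (simp add: lessThan_Suc)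
          have "p * card (span_set p n ws j) \<le> card (span_set p n (ws(j := w)) (Suc j))"
            by (rule card_growth[OF p wsF wF wn])
          moreover have "p ^ j \<le> card (span_set p n ws j)" using g by (simp add: good_def)
          ultimately show "p ^ Suc j \<le> card (span_set p n (ws(j := w)) (Suc j))"
            using p0 by (metis mult_le_mono2 order_trans power_Suc)
        qed
        then show ?thesis by blast
      qed
    qed
  qed
  from claim[of "Suc m"] bad obtain j ws where j: "j \<le> Suc m" and g: "good ws j"
    and cov: "T \<subseteq> vadd p n y0 ` span_set p n ws j" by blast
  have "j \<noteq> Suc m" using g bad by blast
  then have "j \<le> m" using j by simp
  moreover have "\<forall>l<j. ws l \<in> Fvec p n" using g VF by (auto simp: good_def)
  ultimately show ?thesis using g cov unfolding good_def by blast
qed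




lemma subset_count:
  assumes F: "finite F" and Y: "finite Y" "card Y = a" and ar: "a \<le> r"
  shows "card {T. card T = r \<and> Y \<subseteq> T \<and> T \<subseteq> F} \<le> card F ^ (r - a)"
proof -
  define X where "X = {T. card T = r \<and> Y \<subseteq> T \<and> T \<subseteq> F}"
  have inj: "inj_on (\<lambda>T. T - Y) X"
    by (rule inj_onI) (simp add: X_def, metis Diff_partition)
  have sub: "(\<lambda>T. T - Y) ` X \<subseteq> {Z. Z \<subseteq> F \<and> card Z = r - a}"
  proof clarify
    fix T assume "T \<in> X"
    then have "card T = r" "Y \<subseteq> T" "T \<subseteq> F" by (auto simp: X_def)
    moreover have "finite T" using F \<open>T \<subseteq> F\<close> finite_subset by blast
    ultimately show "T - Y \<subseteq> F \<and> card (T - Y) = r - a"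
      using Y by (auto simp: card_Diff_subset)
  qed
  have "card X = card ((\<lambda>T. T - Y) ` X)" using card_image[OF inj] by simp
  also have "\<dots> \<le> card {Z. Z \<subseteq> F \<and> card Z = r - a}"
    by (rule card_mono[OF _ sub]) (use F in simp)
  also have "\<dots> = card F choose (r - a)" using n_subsets[OF F] by simp
  also have "\<dots> \<le> card F ^ (r - a)"
    by (cases "r - a \<le> card F") (auto simp: binomial_le_pow binomial_eq_0)
  finally show ?thesis unfolding X_def .
qed

definition badset :: "nat \<Rightarrow> nat \<Rightarrow> nat \<Rightarrow> nat \<Rightarrow> (nat \<Rightarrow> nat) set set" where
  "badset p n m r = {T. T \<subseteq> Fvec p n \<and> card T = r \<and> (\<exists>A. affine_subspace p n m A \<and> T \<subseteq> A)}"

lemma bad_count: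
  assumes p: "prime p" and mr: "m < r"
  shows "card (badset p n m r) \<le> (\<Sum>j\<le>m. p ^ n * (p ^ n) ^ j * (p ^ j) ^ (r - Suc j))"
proof -
  have p0: "0 < p" using p prime_gt_0_nat by blast
  define U where "U = Fvec p n"
  define W where "W j = extf j U (\<lambda>_. 0)" for j
  define Y where "Y y0 ws j = insert y0 ((\<lambda>l. vadd p n y0 (ws l)) ` {..<j})"
    for y0 :: "nat \<Rightarrow> nat" and ws :: "nat \<Rightarrow> nat \<Rightarrow> nat" and j :: nat
  define F where "F y0 ws j = vadd p n y0 ` span_set p n ws j"
    for y0 :: "nat \<Rightarrow> nat" and ws :: "nat \<Rightarrow> nat \<Rightarrow> nat" and j :: nat
  define G where "G j = {(y0, ws). y0 \<in> U \<and> ws \<in> W j \<and> card (Y y0 ws j) = Suc j}" for j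
  define Fam where "Fam j z = {T. card T = r \<and> Y (fst z) (snd z) j \<subseteq> T \<and> T \<subseteq> F (fst z) (snd z) j}" for j z
  have Ufin: "finite U" "card U = p ^ n" unfolding U_def using Fvec_card[of p n] by simp_all
  have Wfin: "finite (W j)" "card (W j) = (p ^ n) ^ j" for j
    unfolding W_def using extf_card[OF Ufin(1), of j "\<lambda>_. 0"] Ufin(2) by simp_all
  have FU: "F y0 ws j \<subseteq> U" for y0 ws j unfolding F_def U_def using vadd_Fvec[OF p0] by blast
  have Ffin: "finite (F y0 ws j)" for y0 ws j by (rule finite_subset[OF FU Ufin(1)])
  have Fcard: "card (F y0 ws j) \<le> p ^ j" for y0 ws j
    unfolding F_def by (rule le_trans[OF card_image_le[OF span_finite] span_card])
  have cover: "badset p n m r \<subseteq> (\<Union>j\<in>{..m}. \<Union>z\<in>G j. Fam j z)"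
  proof
    fix T assume "T \<in> badset p n m r"
    then have TU: "T \<subseteq> U" and cT: "card T = r" and "\<exists>A. affine_subspace p n m A \<and> T \<subseteq> A"
      by (auto simp: badset_def U_def)
    then obtain A where aff: "affine_subspace p n m A" and TA: "T \<subseteq> A" by blast
    from aff obtain x vs where x: "x \<in> Fvec p n"
      and A: "A = {vadd p n x (lincomb p n t vs m) | t. t \<in> Fvec p m}"
      unfolding affine_subspace_def by blast
    have "T \<noteq> {}" using cT mr by auto
    then obtain y0 where y0: "y0 \<in> T" by blast
    obtain j ws where j: "j \<le> m" and wsF: "\<forall>l<j. ws l \<in> Fvec p n" and ws0: "\<forall>l\<ge>j. ws l = (\<lambda>_. 0)"
      and wsT: "\<forall>l<j. vadd p n y0 (ws l) \<in> T" and wsn: "\<forall>l<j. ws l \<noteq> (\<lambda>_. 0)"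
      and inj: "inj_on ws {..<j}" and cov: "T \<subseteq> vadd p n y0 ` span_set p n ws j"
      using greedy[OF p x A TA y0] by blast
    have y0U: "y0 \<in> U" using y0 TU by blast
    have zero: "(\<lambda>_. 0) \<in> Fvec p n" using p0 by (simp add: Fvec_def)
    have notin: "y0 \<notin> (\<lambda>l. vadd p n y0 (ws l)) ` {..<j}"
    proof
      assume "y0 \<in> (\<lambda>l. vadd p n y0 (ws l)) ` {..<j}"
      then obtain l where l: "l < j" "y0 = vadd p n y0 (ws l)" by auto
      then have "vadd p n y0 (ws l) = vadd p n y0 (\<lambda>_. 0)" using vadd_zero y0U U_def by metis
      then have "ws l = (\<lambda>_. 0)" using vadd_inj[OF p0 _ zero] wsF l by blast
      then show False using wsn l by blast
    qed
    have inj2: "inj_on (\<lambda>l. vadd p n y0 (ws l)) {..<j}"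
    proof (rule inj_onI)
      fix a b assume a: "a \<in> {..<j}" and b: "b \<in> {..<j}" and e: "vadd p n y0 (ws a) = vadd p n y0 (ws b)"
      have "ws a = ws b" using vadd_inj[OF p0 _ _ e] wsF a b by simp
      then show "a = b" using inj a b by (simp add: inj_on_def)
    qed
    have "card (Y y0 ws j) = Suc j"
      unfolding Y_def using notin card_image[OF inj2] by simp
    moreover have "ws \<in> W j" using wsF ws0 by (auto simp: W_def extf_def U_def)
    ultimately have z: "(y0, ws) \<in> G j" using y0U unfolding G_def by simp
    have "Y y0 ws j \<subseteq> T" using y0 wsT unfolding Y_def by blast
    then have TF: "T \<in> Fam j (y0, ws)" using cT cov unfolding Fam_def F_def by simp
    show "T \<in> (\<Union>j\<in>{..m}. \<Union>z\<in>G j. Fam j z)"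
      by (rule UN_I[of j], simp add: j, rule UN_I[of "(y0,ws)"], rule z, rule TF)
  qed
  have Gfin: "finite (G j)" "card (G j) \<le> p ^ n * (p ^ n) ^ j" for j
  proof -
    have "G j \<subseteq> U \<times> W j" by (auto simp: G_def)
    moreover have "finite (U \<times> W j)" using Ufin Wfin by simp
    ultimately show "finite (G j)" "card (G j) \<le> p ^ n * (p ^ n) ^ j"
      using card_mono[of "U \<times> W j" "G j"] finite_subset[of "G j" "U \<times> W j"] Ufin(2) Wfin(2)[of j]
      by (simp_all add: card_cartesian_product)
  qed
  have Famc: "card (Fam j z) \<le> (p ^ j) ^ (r - Suc j)" if "z \<in> G j" "j \<le> m" for j z
  proof -
    obtain y0 ws where z: "z = (y0, ws)" by fastforce
    have "card (Y y0 ws j) = Suc j" using that z by (auto simp: G_def)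
    moreover have "finite (Y y0 ws j)" by (simp add: Y_def)
    ultimately have "card (Fam j z) \<le> card (F y0 ws j) ^ (r - Suc j)"
      unfolding Fam_def z using subset_count[OF Ffin] that mr by simp
    also have "\<dots> \<le> (p ^ j) ^ (r - Suc j)" by (rule power_mono[OF Fcard]) simp
    finally show ?thesis .
  qed
  have famfin: "finite (Fam j z)" for j z
  proof -
    have "Fam j z \<subseteq> Pow U" using FU[of "fst z" "snd z" j] unfolding Fam_def by blast
    then show ?thesis using Ufin(1) by (meson finite_Pow_iff finite_subset)
  qed
  have "card (badset p n m r) \<le> card (\<Union>j\<in>{..m}. \<Union>z\<in>G j. Fam j z)"
    by (rule card_mono[OF _ cover], intro finite_UN_I finite_atMost Gfin(1) famfin)
  also have "\<dots> \<le> (\<Sum>j\<le>m. card (\<Union>z\<in>G j. Fam j z))" by (rule card_UN_le) simp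
  also have "\<dots> \<le> (\<Sum>j\<le>m. \<Sum>z\<in>G j. card (Fam j z))"
    by (rule sum_mono, rule card_UN_le, rule Gfin)
  also have "\<dots> \<le> (\<Sum>j\<le>m. \<Sum>z\<in>G j. (p ^ j) ^ (r - Suc j))"
    by (intro sum_mono Famc) auto
  also have "\<dots> \<le> (\<Sum>j\<le>m. p ^ n * (p ^ n) ^ j * (p ^ j) ^ (r - Suc j))"
    by (intro sum_mono) (simp add: mult_le_mono1 Gfin(2))
  finally show ?thesis .
qed

lemma exp_mono:
  assumes "j \<le> m" "2 * m + 1 \<le> r"
  shows "n + n * j + j * (r - Suc j) \<le> n + n * m + m * (r - Suc m)"
proof -
  define a where "a = r - Suc m"
  define d where "d = m - j"
  have m: "m = j + d" and rj: "r - Suc j = a + d" using assms by (auto simp: a_def d_def)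
  have ja: "j \<le> a" using assms by (auto simp: a_def)
  have "j * (r - Suc j) = j * a + j * d" by (simp add: rj algebra_simps)
  also have "\<dots> \<le> j * a + d * a" using ja by (simp add: mult.commute)
  also have "\<dots> = (j + d) * a" by (simp add: add_mult_distrib)
  also have "\<dots> = m * (r - Suc m)" by (simp add: m[symmetric] a_def)
  finally have "j * (r - Suc j) \<le> m * (r - Suc m)" .
  moreover have "n * j \<le> n * m" using assms(1) by simp
  ultimately show ?thesis by linarith
qed

lemma bad_count2:
  assumes p: "prime p" and mr: "2 * m + 1 \<le> r"
  shows "card (badset p n m r) \<le> Suc m * p ^ (n + n * m + m * (r - Suc m))"
proof -
  have p0: "0 < p" using p prime_gt_0_nat by blast
  have "card (badset p n m r) \<le> (\<Sum>j\<le>m. p ^ n * (p ^ n) ^ j * (p ^ j) ^ (r - Suc j))"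
    by (rule bad_count[OF p]) (use mr in simp)
  also have "\<dots> = (\<Sum>j\<le>m. p ^ (n + n * j + j * (r - Suc j)))"
    by (simp add: power_add power_mult)
  also have "\<dots> \<le> (\<Sum>j\<le>m. p ^ (n + n * m + m * (r - Suc m)))"
    by (rule sum_mono, rule power_increasing[OF exp_mono]) (use mr p0 in auto)
  also have "\<dots> = Suc m * p ^ (n + n * m + m * (r - Suc m))" by simp
  finally show ?thesis .
qed




lemma exists_good:
  assumes U: "finite U" "card U = N" and sN: "s \<le> N" and rs: "r \<le> s"
    and B: "B \<subseteq> {T. T \<subseteq> U \<and> card T = r}"
    and lt: "card B * (s choose r) < N choose r"
  shows "\<exists>S \<subseteq> U. card S = s \<and> (\<forall>T\<in>B. \<not> T \<subseteq> S)"
proof -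
  define Ss where "Ss = {S. S \<subseteq> U \<and> card S = s}"
  have cSs: "card Ss = N choose s" using n_subsets[OF U(1), of s] U(2) by (simp add: Ss_def)
  have Bfin: "finite B"
  proof -
    have "B \<subseteq> Pow U" using B by blast
    then show ?thesis using U(1) by (meson finite_Pow_iff finite_subset)
  qed
  have each: "card {S \<in> Ss. T \<subseteq> S} \<le> (N - r) choose (s - r)" if T: "T \<in> B" for T
  proof -
    have TU: "T \<subseteq> U" and cT: "card T = r" using T B by auto
    have Tfin: "finite T" using TU U(1) finite_subset by blast
    have inj: "inj_on (\<lambda>S. S - T) {S \<in> Ss. T \<subseteq> S}"
      by (rule inj_onI) (simp, metis Diff_partition)
    have sub: "(\<lambda>S. S - T) ` {S \<in> Ss. T \<subseteq> S} \<subseteq> {Z. Z \<subseteq> U - T \<and> card Z = s - r}"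
    proof clarify
      fix S assume "S \<in> Ss" "T \<subseteq> S"
      then have "S \<subseteq> U" "card S = s" by (auto simp: Ss_def)
      then show "S - T \<subseteq> U - T \<and> card (S - T) = s - r"
        using \<open>T \<subseteq> S\<close> Tfin cT by (auto simp: card_Diff_subset)
    qed
    have "card {S \<in> Ss. T \<subseteq> S} = card ((\<lambda>S. S - T) ` {S \<in> Ss. T \<subseteq> S})"
      using card_image[OF inj] by simp
    also have "\<dots> \<le> card {Z. Z \<subseteq> U - T \<and> card Z = s - r}"
      by (rule card_mono[OF _ sub]) (use U(1) in simp)
    also have "\<dots> = card (U - T) choose (s - r)" using n_subsets[of "U - T"] U(1) by simp
    also have "card (U - T) = N - r" using TU Tfin cT U(2) by (simp add: card_Diff_subset)
    finally show ?thesis .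
  qed
  have "card (\<Union>T\<in>B. {S \<in> Ss. T \<subseteq> S}) \<le> (\<Sum>T\<in>B. card {S \<in> Ss. T \<subseteq> S})"
    by (rule card_UN_le[OF Bfin])
  also have "\<dots> \<le> (\<Sum>T\<in>B. (N - r) choose (s - r))" by (rule sum_mono, rule each)
  also have "\<dots> = card B * ((N - r) choose (s - r))" by simp
  also have "\<dots> < N choose s"
  proof -
    have cm: "(N choose s) * (s choose r) = (N choose r) * ((N - r) choose (s - r))"
      by (rule choose_mult[OF rs sN])
    have pos: "0 < (N - r) choose (s - r)" using rs sN by simp
    have "card B * (s choose r) * ((N - r) choose (s - r)) < (N choose r) * ((N - r) choose (s - r))"
      using lt pos by simp
    then have "card B * ((N - r) choose (s - r)) * (s choose r) < (N choose s) * (s choose r)"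
      using cm by (simp add: mult.commute mult.left_commute)
    then show ?thesis by (simp add: mult_less_cancel2)
  qed
  finally have "card (\<Union>T\<in>B. {S \<in> Ss. T \<subseteq> S}) < card Ss" using cSs by simp
  then have ne: "(\<Union>T\<in>B. {S \<in> Ss. T \<subseteq> S}) \<noteq> Ss" by auto
  have "(\<Union>T\<in>B. {S \<in> Ss. T \<subseteq> S}) \<subseteq> Ss" by blast
  with ne obtain S where "S \<in> Ss" "S \<notin> (\<Union>T\<in>B. {S \<in> Ss. T \<subseteq> S})" by blast
  then have "S \<in> Ss" "\<forall>T\<in>B. \<not> T \<subseteq> S" by auto
  then show ?thesis unfolding Ss_def by blast
qed




lemma main_lemma:
  fixes n m r p :: nat and \<epsilon> :: real
  assumes m1: "1 \<le> m" and mn: "m + 2 \<le> n" and e0: "0 < \<epsilon>" and e1: "\<epsilon> < 1"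
    and r: "r = nat \<lceil>real ((m+1)*(n-m+1)) / \<epsilon>\<rceil>"
    and p: "prime p" and pbig: "(m+1) * r ^ r < p"
  shows "\<exists>R \<subseteq> Fvec p n. real (card R) \<ge> real p powr (real n - real m - \<epsilon>) / 2 \<and>
           (\<forall>A. affine_subspace p n m A \<longrightarrow> card (A \<inter> R) \<le> r - 1)"
proof -
  define q where "q = (m+1)*(n-m+1)"
  have p2: "2 \<le> p" using p prime_ge_2_nat by blast
  define P where "P = real p"
  have P2: "2 \<le> P" using p2 P_def by simp
  have rge: "real q / \<epsilon> \<le> real r" unfolding r q_def[symmetric] by linarith
  have rq: "real q \<le> \<epsilon> * real r" using rge e0 by (simp add: pos_divide_le_eq mult.commute)
  have "real q \<le> real q / \<epsilon>" using e0 e1 by (simp add: le_divide_eq mult_left_le)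
  then have "real q \<le> real r" using rge by linarith
  then have qr: "q \<le> r" by simp
  have "(m+1) * 3 \<le> q" unfolding q_def using mn by (intro mult_le_mono2) simp
  then have r2m: "2 * m + 1 \<le> r" using qr by simp
  have qreal: "real q = real m * real n - real m * real m + real n + 1"
  proof -
    have d: "real (n - m) = real n - real m" using mn by (simp add: of_nat_diff)
    have "real q = (real m + 1) * (real (n - m) + 1)" by (simp only: q_def of_nat_mult of_nat_add of_nat_1)
    then show ?thesis unfolding d by (simp add: algebra_simps)
  qed
  define x where "x = P powr (real n - real m - \<epsilon>)"
  have x2: "P \<le> x"
  proof -
    have "P powr 1 \<le> P powr (real n - real m - \<epsilon>)"
      by (rule powr_mono) (use mn e1 P2 in auto)
    then show ?thesis using P2 by (simp add: x_def)
  qed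
  have xN: "x \<le> P ^ n"
  proof -
    have "P powr (real n - real m - \<epsilon>) \<le> P powr real n"
      by (rule powr_mono) (use e0 P2 in auto)
    then show ?thesis using P2 by (simp add: x_def powr_realpow)
  qed
  define s where "s = nat \<lceil>x / 2\<rceil>"
  have s1: "x / 2 \<le> real s" unfolding s_def by linarith
  have s2: "real s \<le> x" unfolding s_def using x2 P2 by linarith
  have sN: "s \<le> p ^ n"
  proof -
    have "real s \<le> real p ^ n" using s2 xN unfolding P_def by linarith
    then show ?thesis by (metis of_nat_le_iff of_nat_power)
  qed
  define U where "U = Fvec p n"
  have Ufin: "finite U" "card U = p ^ n" unfolding U_def using Fvec_card[of p n] by simp_all
  have xs: "real p powr (real n - real m - \<epsilon>) / 2 \<le> real s" using s1 x_def P_def by simp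
  have "\<exists>S. S \<subseteq> U \<and> card S = s \<and> (\<forall>A. affine_subspace p n m A \<longrightarrow> card (A \<inter> S) \<le> r - 1)"
  proof (cases "s < r")
    case True
    obtain S where S: "S \<subseteq> U" "card S = s" "finite S"
      using obtain_subset_with_card_n[of s U] sN Ufin by auto
    have "card (A \<inter> S) \<le> r - 1" for A
      using card_mono[OF S(3), of "A \<inter> S"] S(2) True by auto
    then show ?thesis using S by blast
  next
    case False
    then have rs: "r \<le> s" by simp
    define B where "B = badset p n m r"
    define E where "E = n + n * m + m * (r - Suc m)"
    have cB: "card B \<le> Suc m * p ^ E" unfolding B_def E_def by (rule bad_count2[OF p r2m])
    have cs: "s choose r \<le> s ^ r" by (rule binomial_le_pow[OF rs])
    have Epos: "0 < P" using P2 by simp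
    have L1: "real (card B * (s choose r)) \<le> real (Suc m) * P ^ E * x ^ r"
    proof -
      have "real (card B * (s choose r)) \<le> real (Suc m * p ^ E * s ^ r)"
        using mult_le_mono[OF cB cs] by (simp only: of_nat_le_iff)
      also have "\<dots> = real (Suc m) * P ^ E * real s ^ r" by (simp only: P_def of_nat_mult of_nat_power)
      also have "\<dots> \<le> real (Suc m) * P ^ E * x ^ r"
        by (intro mult_left_mono power_mono) (use Epos s2 in auto)
      finally show ?thesis .
    qed
    have expo: "real E + (real n - real m - \<epsilon>) * real r \<le> real (n * r) - 1"
    proof -
      have Ereal: "real E = real n + real n * real m + real m * real r - real m * real m - real m"
      proof -
        have d: "real (r - Suc m) = real r - real m - 1" using r2m by (simp add: of_nat_diff)
        have "real E = real n + real n * real m + real m * real (r - Suc m)"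
          by (simp only: E_def of_nat_add of_nat_mult)
        then show ?thesis unfolding d by (simp add: algebra_simps)
      qed
      show ?thesis using Ereal rq qreal by (simp add: algebra_simps)
    qed
    have L2: "P ^ E * x ^ r \<le> P ^ (n * r) / P"
    proof -
      have "x ^ r = P powr ((real n - real m - \<epsilon>) * real r)"
        unfolding x_def using Epos by (simp add: powr_realpow[symmetric] powr_powr)
      moreover have "P ^ E = P powr real E" using Epos by (simp add: powr_realpow)
      ultimately have "P ^ E * x ^ r = P powr (real E + (real n - real m - \<epsilon>) * real r)"
        by (simp add: powr_add)
      also have "\<dots> \<le> P powr (real (n * r) - 1)"
        by (rule powr_mono[OF expo]) (use P2 in simp)
      also have "\<dots> = P powr real (n * r) / P powr 1" by (rule powr_diff)
      also have "\<dots> = P ^ (n * r) / P"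
      proof -
        have h1: "P powr real (n * r) = P ^ (n * r)" by (rule powr_realpow[OF Epos])
        have h2: "P powr 1 = P" using Epos by simp
        show ?thesis unfolding h1 h2 ..
      qed
      finally show ?thesis .
    qed
    have rpos: "0 < r" using r2m by simp
    have rN: "r \<le> p ^ n" using rs sN by simp
    have L3: "P ^ (n * r) / real r ^ r \<le> real (p ^ n choose r)"
    proof -
      have "(real (p ^ n) / real r) ^ r \<le> real (p ^ n choose r)"
        by (rule binomial_ge_n_over_k_pow_k[OF rN])
      moreover have "(real (p ^ n) / real r) ^ r = P ^ (n * r) / real r ^ r"
        by (simp add: P_def power_divide power_mult)
      ultimately show ?thesis by simp
    qed
    have L4: "real (Suc m) * (P ^ (n * r) / P) < P ^ (n * r) / real r ^ r"
    proof -
      have big: "real (Suc m) * real r ^ r < P"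
        using pbig P_def by (metis Suc_eq_plus1 of_nat_less_iff of_nat_mult of_nat_power)
      have pos1: "0 < P ^ (n * r)" using Epos by simp
      have pos2: "0 < real r ^ r" using rpos by simp
      have "real (Suc m) * (P ^ (n * r) / P) * real r ^ r = P ^ (n * r) * (real (Suc m) * real r ^ r) / P"
        by (simp add: algebra_simps)
      also have "\<dots> < P ^ (n * r) * P / P"
        by (intro divide_strict_right_mono mult_strict_left_mono big pos1 Epos)
      also have "\<dots> = P ^ (n * r)" using Epos by simp
      finally show ?thesis using pos2 by (simp add: pos_less_divide_eq)
    qed
    have "real (card B * (s choose r)) < real (p ^ n choose r)"
    proof -
      have "real (card B * (s choose r)) \<le> real (Suc m) * (P ^ E * x ^ r)"
        using L1 by (simp add: mult.assoc)
      also have "\<dots> \<le> real (Suc m) * (P ^ (n * r) / P)"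
        by (rule mult_left_mono[OF L2]) simp
      also have "\<dots> < P ^ (n * r) / real r ^ r" by (rule L4)
      also have "\<dots> \<le> real (p ^ n choose r)" by (rule L3)
      finally show ?thesis .
    qed
    then have lt: "card B * (s choose r) < p ^ n choose r" by (simp only: of_nat_less_iff)
    have Bsub: "B \<subseteq> {T. T \<subseteq> U \<and> card T = r}" by (auto simp: B_def badset_def U_def)
    obtain S where S: "S \<subseteq> U" "card S = s" and noT: "\<forall>T\<in>B. \<not> T \<subseteq> S"
      using exists_good[OF Ufin sN rs Bsub lt] by blast
    have Sfin: "finite S" using S(1) Ufin(1) finite_subset by blast
    have "card (A \<inter> S) \<le> r - 1" if aff: "affine_subspace p n m A" for A
    proof (rule ccontr)
      assume "\<not> card (A \<inter> S) \<le> r - 1"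
      then have "r \<le> card (A \<inter> S)" by simp
      then obtain T where T: "T \<subseteq> A \<inter> S" "card T = r" using obtain_subset_with_card_n by metis
      have "T \<in> B" using T S(1) aff unfolding B_def badset_def U_def by blast
      then show False using noT T by blast
    qed
    then show ?thesis using S by blast
  qed
  then show ?thesis using xs U_def by blast
qed


theorem lemma6:
  fixes d k :: nat and \<epsilon> :: real
  assumes "2 \<le> k" and "k + 2 \<le> d" and "0 < \<epsilon>" and "\<epsilon> < 1"
  defines "r \<equiv> nat \<lceil>real (k * (d - k + 1)) / \<epsilon>\<rceil>"
  shows "\<exists>p0::nat. 0 < p0 \<and>
    (\<forall>p::nat. prime p \<and> p0 \<le> p \<longrightarrow>
      (\<exists>R \<subseteq> Fvec p (d - 1).
         real (card R) \<ge> real p powr (real d - real k - \<epsilon>) / 2 \<and>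
         (\<forall>A. affine_subspace p (d - 1) (k - 1) A \<longrightarrow> card (A \<inter> R) \<le> r - 1)))"
proof (intro exI[of _ "k * r ^ r + 1"] conjI allI impI)
  show "0 < k * r ^ r + 1" by simp
  fix p :: nat assume pp: "prime p \<and> k * r ^ r + 1 \<le> p"
  have eq: "(k - 1 + 1) * (d - 1 - (k - 1) + 1) = k * (d - k + 1)" using assms(1,2) by simp
  have r': "r = nat \<lceil>real ((k - 1 + 1) * (d - 1 - (k - 1) + 1)) / \<epsilon>\<rceil>"
    unfolding eq r_def ..
  have big: "(k - 1 + 1) * r ^ r < p" using pp assms(1) by simp
  have m1: "1 \<le> k - 1" and mn: "k - 1 + 2 \<le> d - 1" using assms(1,2) by auto
  obtain R where R: "R \<subseteq> Fvec p (d - 1)"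
    "real p powr (real (d - 1) - real (k - 1) - \<epsilon>) / 2 \<le> real (card R)"
    "\<forall>A. affine_subspace p (d - 1) (k - 1) A \<longrightarrow> card (A \<inter> R) \<le> r - 1"
    using main_lemma[OF m1 mn assms(3,4) r' conjunct1[OF pp] big] by blast
  have ex: "real (d - 1) - real (k - 1) - \<epsilon> = real d - real k - \<epsilon>" using assms(1,2) by (simp add: of_nat_diff)
  show "\<exists>R \<subseteq> Fvec p (d - 1).
         real (card R) \<ge> real p powr (real d - real k - \<epsilon>) / 2 \<and>
         (\<forall>A. affine_subspace p (d - 1) (k - 1) A \<longrightarrow> card (A \<inter> R) \<le> r - 1)"
    using R ex by auto
qed

end
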